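(* Let $G$ be a maximal outerplanar graph and $\widetilde{G}$ its reduced graph. If $\widetilde{G}$ contains $M_1$ as an induced subgraph, or contains $M_1^{\ell}$ as an induced subgraph for some $\ell\ge 0$, then $G$ is not in $B_1$.
   Context: A graph is maximal outerplanar if it is outerplanar and adding any single new edge yields a non-outerplanar graph. $S_3$ is the graph with vertices $x_1,x_2,x_3,y_1,y_2,y_3$ and edges $\{x_1,x_2\},\{x_1,x_3\},\{x_2,x_3\},\{x_1,y_1\},\{x_2,y_1\},\{x_2,y_2\},\{x_3,y_2\},\{x_3,y_3\},\{x_1,y_3\}$; its central vertices are $x_1,x_2,x_3$ and central edges are the three edges among them. The reduced graph $\widetilde{G}$ is obtained by coloring, for every induced subgraph of $G$ isomorphic to $S_3$, its central vertices and central edges, and then deleting all uncolored vertices and edges. $M_1$ is the graph on $d_1,\dots,d_5$ with edges $d_1d_2,d_1d_3,d_2d_3,d_3d_4,d_2d_4,d_4d_5,d_2d_5$. For $\ell\ge 0$, $M_1^{\ell}$ denotes any graph of the following form: vertices $a_1,a_2,a_3,a_4$ forming a 4-cycle $a_1a_2a_3a_4$ plus exactly one of the chords $a_1a_3$, $a_2a_4$; vertices $b_1,b_2,b_3,b_4$ forming a 4-cycle $b_1b_2b_3b_4$ plus exactly one of the chords $b_1b_3$, $b_2b_4$; and vertices $c_0=a_1, c_1,\dots,c_{2\ell-1}, c_{2\ell}=b_1$ such that for each $1\le i\le \ell$ the vertices $c_{2i-2},c_{2i-1},c_{2i}$ form a triangle (edges $c_{2i-2}c_{2i-1}$, $c_{2i-2}c_{2i}$,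 $c_{2i-1}c_{2i}$), with no further edges; for $\ell=0$ there are no $c$-vertices and $a_1=b_1$. $B_1$ is the class of graphs having an EPG representation (paths on a rectangular grid, one per vertex, two vertices adjacent iff their paths share a grid edge) in which every path has at most one bend. *)

theory Defs
  imports Main
begin

definition simple_graph :: "'a set \<Rightarrow> 'a set set \<Rightarrow> bool" where
  "simple_graph V E \<longleftrightarrow> finite V \<and> E \<subseteq> {{u, v} | u v. u \<in> V \<and> v \<in> V \<and> u \<noteq> v}"

text \<open>Outerplanar: the vertices can be placed on a circle (cyclic order given by a
bijection to positions 0..n-1) such that the edges, drawn as chords, do not cross.\<close>

definition outerplanar :: "'a set \<Rightarrow> 'a set set \<Rightarrow> bool" where
  "outerplanar V E \<longleftrightarrow>
     (\<exists>pos :: 'a \<Rightarrow> nat. bij_betw pos V {0..<card V} \<and>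
        (\<forall>a b c d. {a, b} \<in> E \<longrightarrow> {c, d} \<in> E \<longrightarrow>
            \<not> (pos a < pos c \<and> pos c < pos b \<and> pos b < pos d)))"

definition maximal_outerplanar :: "'a set \<Rightarrow> 'a set set \<Rightarrow> bool" where
  "maximal_outerplanar V E \<longleftrightarrow> outerplanar V E \<and>
     (\<forall>u\<in>V. \<forall>v\<in>V. u \<noteq> v \<longrightarrow> {u, v} \<notin> E \<longrightarrow> \<not> outerplanar V (insert {u, v} E))"

definition induced_emb :: "'b set \<Rightarrow> 'b set set \<Rightarrow> 'a set \<Rightarrow> 'a set set \<Rightarrow> ('b \<Rightarrow> 'a) \<Rightarrow> bool" where
  "induced_emb VH EH V E f \<longleftrightarrow> inj_on f VH \<and> f ` VH \<subseteq> V \<and>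
     (\<forall>x\<in>VH. \<forall>y\<in>VH. ({f x, f y} \<in> E \<longleftrightarrow> {x, y} \<in> EH))"

definition has_induced :: "'b set \<Rightarrow> 'b set set \<Rightarrow> 'a set \<Rightarrow> 'a set set \<Rightarrow> bool" where
  "has_induced VH EH V E \<longleftrightarrow> (\<exists>f. induced_emb VH EH V E f)"

text \<open>S_3 with x1,x2,x3 = 0,1,2 and y1,y2,y3 = 3,4,5.\<close>

definition S3_V :: "nat set" where "S3_V = {0..5}"

definition S3_E :: "nat set set" where
  "S3_E = {{0,1},{0,2},{1,2},{0,3},{1,3},{1,4},{2,4},{2,5},{0,5}}"

definition red_V :: "'a set \<Rightarrow> 'a set set \<Rightarrow> 'a set" where
  "red_V V E = {f i | f i. induced_emb S3_V S3_E V E f \<and> i \<in> {0,1,2}}"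

definition red_E :: "'a set \<Rightarrow> 'a set set \<Rightarrow> 'a set set" where
  "red_E V E = {{f i, f j} | f i j. induced_emb S3_V S3_E V E f \<and>
                  i \<in> {0,1,2} \<and> j \<in> {0,1,2} \<and> i \<noteq> j}"

text \<open>M_1 with d_i = i.\<close>

definition M1_V :: "nat set" where "M1_V = {1..5}"

definition M1_E :: "nat set set" where
  "M1_E = {{1,2},{1,3},{2,3},{3,4},{2,4},{4,5},{2,5}}"

text \<open>M_1^l: c_i = i (0 \<le> i \<le> 2l), a_1 = c_0 = 0, a_2,a_3,a_4 = 2l+1,2l+2,2l+3,
b_1 = c_{2l} = 2l, b_2,b_3,b_4 = 2l+4,2l+5,2l+6. The booleans ca, cb select the chord
(True: a_1a_3 resp. b_1b_3; False: a_2a_4 resp. b_2b_4).\<close>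

definition M1l_V :: "nat \<Rightarrow> nat set" where "M1l_V l = {0..2*l+6}"

definition M1l_E :: "nat \<Rightarrow> bool \<Rightarrow> bool \<Rightarrow> nat set set" where
  "M1l_E l ca cb =
     {{0, 2*l+1}, {2*l+1, 2*l+2}, {2*l+2, 2*l+3}, {2*l+3, 0},
      if ca then {0, 2*l+2} else {2*l+1, 2*l+3}}
   \<union> {{2*l, 2*l+4}, {2*l+4, 2*l+5}, {2*l+5, 2*l+6}, {2*l+6, 2*l},
      if cb then {2*l, 2*l+5} else {2*l+4, 2*l+6}}
   \<union> (\<Union>i\<in>{1..l}. {{2*i-2, 2*i-1}, {2*i-2, 2*i}, {2*i-1, 2*i}})"

text \<open>Grid points are int pairs; grid edges are sets of two points at unit distance.\<close>

definition hseg :: "int \<Rightarrow> int \<Rightarrow> int \<Rightarrow> (int \<times> int) set set" where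
  "hseg y a b = {{(i, y), (i + 1, y)} | i. min a b \<le> i \<and> i + 1 \<le> max a b}"

definition vseg :: "int \<Rightarrow> int \<Rightarrow> int \<Rightarrow> (int \<times> int) set set" where
  "vseg x a b = {{(x, j), (x, j + 1)} | j. min a b \<le> j \<and> j + 1 \<le> max a b}"

definition bend1_path :: "(int \<times> int) set set \<Rightarrow> bool" where
  "bend1_path P \<longleftrightarrow> P \<noteq> {} \<and>
     (\<exists>cx cy h v. P = hseg cy cx h \<union> vseg cx cy v)"

definition in_B1 :: "'a set \<Rightarrow> 'a set set \<Rightarrow> bool" where
  "in_B1 V E \<longleftrightarrow> (\<exists>P :: 'a \<Rightarrow> (int \<times> int) set set.
      (\<forall>v\<in>V. bend1_path (P v)) \<and>
      (\<forall>u\<in>V. \<forall>v\<in>V. u \<noteq> v \<longrightarrow> ({u, v} \<in> E \<longleftrightarrow> P u \<inter> P v \<noteq> {})))"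

end

theory Submission
  imports Defs
begin

declare [[smt_timeout = 600]]

lemma op_K4:
  assumes op: "outerplanar V E"
    and "a \<in> V \<and> b \<in> V \<and> c \<in> V \<and> d \<in> V"
    and "distinct [a, b, c, d]"
    and "{a, b} \<in> E \<and> {a, c} \<in> E \<and> {a, d} \<in> E \<and> {b, c} \<in> E \<and> {b, d} \<in> E \<and> {c, d} \<in> E"
  shows False
proof -
  obtain p :: "_ \<Rightarrow> nat" where inj: "inj_on p V" and H: "\<forall>a b c d. {a, b} \<in> E \<longrightarrow> {c, d} \<in> E \<longrightarrow> \<not> (p a < p c \<and> p c < p b \<and> p b < p d)"
    using op unfolding outerplanar_def bij_betw_def by blast
  define q where "q x = int (p x)" for x
  have Hq: "\<forall>a b c d. {a, b} \<in> E \<longrightarrow> {c, d} \<in> E \<longrightarrow> \<not> (q a < q c \<and> q c < q b \<and> q b < q d)" using H unfolding q_def by simp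
  have d: "distinct [q a, q b, q c, q d]" using inj assms(2,3) unfolding q_def by (simp add: inj_on_eq_iff)
  have e: "{a, b} \<in> E" "{a, c} \<in> E" "{a, d} \<in> E" "{b, a} \<in> E" "{b, c} \<in> E" "{b, d} \<in> E" "{c, a} \<in> E" "{c, b} \<in> E" "{c, d} \<in> E" "{d, a} \<in> E" "{d, b} \<in> E" "{d, c} \<in> E" using assms(4) by (auto simp: insert_commute)
  have dd: "q a \<noteq> q b \<and> q a \<noteq> q c \<and> q a \<noteq> q d \<and> q b \<noteq> q c \<and> q b \<noteq> q d \<and> q c \<noteq> q d" using d by auto
  show False using dd Hq[rule_format, OF e(1) e(9)] Hq[rule_format, OF e(1) e(12)] Hq[rule_format, OF e(2) e(6)] Hq[rule_format, OF e(2) e(11)] Hq[rule_format, OF e(3) e(5)] Hq[rule_format, OF e(3) e(8)] Hq[rule_format, OF e(4) e(9)] Hq[rule_format, OF e(4) e(12)] Hq[rule_format, OF e(5) e(3)] Hq[rule_format, OF e(5) e(10)] Hq[rule_format, OF e(6) e(2)] Hq[rule_format, OF e(6) e(7)] Hq[rule_format, OF e(7) e(6)] Hq[rule_format, OF e(7) e(11)] Hq[rule_format, OF e(8) e(3)] Hq[rule_format, OF e(8) e(10)] Hq[rule_format, OF e(9) e(1)] Hq[rule_format, OF e(9) e(4)] Hq[rule_format, OF e(10) e(5)] Hq[rule_format, OF e(10) e(8)] Hq[rule_format, OF e(11) e(2)] Hq[rule_format, OF e(11) e(7)] Hq[rule_format, OF e(12) e(1)] Hq[rule_format, OF e(12)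 e(4)] by (smt (z3))
qed
lemma op_K113:
  assumes op: "outerplanar V E"
    and "a \<in> V \<and> b \<in> V \<and> c1 \<in> V \<and> c2 \<in> V \<and> c3 \<in> V"
    and "distinct [a, b, c1, c2, c3]"
    and "{a, b} \<in> E \<and> {a, c1} \<in> E \<and> {a, c2} \<in> E \<and> {a, c3} \<in> E \<and> {b, c1} \<in> E \<and> {b, c2} \<in> E \<and> {b, c3} \<in> E"
  shows False
proof -
  obtain p :: "_ \<Rightarrow> nat" where inj: "inj_on p V" and H: "\<forall>a b c d. {a, b} \<in> E \<longrightarrow> {c, d} \<in> E \<longrightarrow> \<not> (p a < p c \<and> p c < p b \<and> p b < p d)"
    using op unfolding outerplanar_def bij_betw_def by blast
  define q where "q x = int (p x)" for x
  have Hq: "\<forall>a b c d. {a, b} \<in> E \<longrightarrow> {c, d} \<in> E \<longrightarrow> \<not> (q a < q c \<and> q c < q b \<and> q b < q d)" using H unfolding q_def by simp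
  have d: "distinct [q a, q b, q c1, q c2, q c3]" using inj assms(2,3) unfolding q_def by (simp add: inj_on_eq_iff)
  have e: "{a, b} \<in> E" "{a, c1} \<in> E" "{a, c2} \<in> E" "{a, c3} \<in> E" "{b, a} \<in> E" "{b, c1} \<in> E" "{b, c2} \<in> E" "{b, c3} \<in> E" "{c1, a} \<in> E" "{c1, b} \<in> E" "{c2, a} \<in> E" "{c2, b} \<in> E" "{c3, a} \<in> E" "{c3, b} \<in> E" using assms(4) by (auto simp: insert_commute)
  have dd: "q a \<noteq> q b \<and> q a \<noteq> q c1 \<and> q a \<noteq> q c2 \<and> q a \<noteq> q c3 \<and> q b \<noteq> q c1 \<and> q b \<noteq> q c2 \<and> q b \<noteq> q c3 \<and> q c1 \<noteq> q c2 \<and> q c1 \<noteq> q c3 \<and> q c2 \<noteq> q c3" using d by auto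
  show False using dd Hq[rule_format, OF e(2) e(7)] Hq[rule_format, OF e(2) e(8)] Hq[rule_format, OF e(2) e(12)] Hq[rule_format, OF e(2) e(14)] Hq[rule_format, OF e(3) e(6)] Hq[rule_format, OF e(3) e(8)] Hq[rule_format, OF e(3) e(10)] Hq[rule_format, OF e(3) e(14)] Hq[rule_format, OF e(4) e(6)] Hq[rule_format, OF e(4) e(7)] Hq[rule_format, OF e(4) e(10)] Hq[rule_format, OF e(4) e(12)] Hq[rule_format, OF e(6) e(3)] Hq[rule_format, OF e(6) e(4)] Hq[rule_format, OF e(6) e(11)] Hq[rule_format, OF e(6) e(13)] Hq[rule_format, OF e(7) e(2)] Hq[rule_format, OF e(7) e(4)] Hq[rule_format, OF e(7) e(9)] Hq[rule_format, OF e(7) e(13)] Hq[rule_format, OF e(8) e(2)] Hq[rule_format, OF e(8) e(3)] Hq[rule_format, OF e(8) e(9)] Hq[rule_format, OF e(8) e(11)] Hq[rule_format, OF e(9) e(7)] Hq[rule_format, OF e(9) e(8)] Hq[rule_format, OF e(9) e(12)] Hq[rule_format, OF e(9) e(14)] Hq[rule_format, OF e(10) e(3)] Hq[rule_format, OF e(10) e(4)] Hq[rule_format, OF e(10) e(11)] Hq[rule_format, OF e(10) e(13)] Hq[rule_format, OF e(11) e(6)] Hq[rule_format, OF e(11) e(8)] Hq[rule_format, OF e(11) e(10)] Hq[rule_format, OF e(11) e(14)] Hq[rule_format, OF e(12) e(2)] Hq[rule_format, OF e(12) e(4)] Hq[rule_format, OF e(12) e(9)] Hq[rule_format, OF e(12)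 e(13)] Hq[rule_format, OF e(13) e(6)] Hq[rule_format, OF e(13) e(7)] Hq[rule_format, OF e(13) e(10)] Hq[rule_format, OF e(13) e(12)] Hq[rule_format, OF e(14) e(2)] Hq[rule_format, OF e(14) e(3)] Hq[rule_format, OF e(14) e(9)] Hq[rule_format, OF e(14) e(11)] by (smt (z3))
qed
lemma op_five:
  assumes op: "outerplanar V E"
    and "a \<in> V \<and> b \<in> V \<and> c \<in> V \<and> y1 \<in> V \<and> y2 \<in> V"
    and "distinct [a, b, c, y1, y2]"
    and "{a, b} \<in> E \<and> {b, c} \<in> E \<and> {c, a} \<in> E \<and> {y1, a} \<in> E \<and> {y1, b} \<in> E \<and> {y2, b} \<in> E \<and> {y2, c} \<in> E \<and> {y1, y2} \<in> E"
  shows False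
proof -
  obtain p :: "_ \<Rightarrow> nat" where inj: "inj_on p V" and H: "\<forall>a b c d. {a, b} \<in> E \<longrightarrow> {c, d} \<in> E \<longrightarrow> \<not> (p a < p c \<and> p c < p b \<and> p b < p d)"
    using op unfolding outerplanar_def bij_betw_def by blast
  define q where "q x = int (p x)" for x
  have Hq: "\<forall>a b c d. {a, b} \<in> E \<longrightarrow> {c, d} \<in> E \<longrightarrow> \<not> (q a < q c \<and> q c < q b \<and> q b < q d)" using H unfolding q_def by simp
  have d: "distinct [q a, q b, q c, q y1, q y2]" using inj assms(2,3) unfolding q_def by (simp add: inj_on_eq_iff)
  have e: "{a, b} \<in> E" "{a, c} \<in> E" "{a, y1} \<in> E" "{b, a} \<in> E" "{b, c} \<in> E" "{b, y1} \<in> E" "{b, y2} \<in> E" "{c, a} \<in> E" "{c, b} \<in> E" "{c, y2} \<in> E" "{y1, a} \<in> E" "{y1, b} \<in> E" "{y1, y2} \<in> E" "{y2, b} \<in> E" "{y2, c} \<in> E" "{y2, y1} \<in> E" using assms(4) by (auto simp: insert_commute)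
  have dd: "q a \<noteq> q b \<and> q a \<noteq> q c \<and> q a \<noteq> q y1 \<and> q a \<noteq> q y2 \<and> q b \<noteq> q c \<and> q b \<noteq> q y1 \<and> q b \<noteq> q y2 \<and> q c \<noteq> q y1 \<and> q c \<noteq> q y2 \<and> q y1 \<noteq> q y2" using d by auto
  show False using dd Hq[rule_format, OF e(1) e(10)] Hq[rule_format, OF e(1) e(13)] Hq[rule_format, OF e(1) e(15)] Hq[rule_format, OF e(1) e(16)] Hq[rule_format, OF e(2) e(6)] Hq[rule_format, OF e(2) e(7)] Hq[rule_format, OF e(2) e(12)] Hq[rule_format, OF e(2) e(14)] Hq[rule_format, OF e(3) e(5)] Hq[rule_format, OF e(3) e(7)] Hq[rule_format, OF e(3) e(9)] Hq[rule_format, OF e(3) e(14)] Hq[rule_format, OF e(3) e(15)] Hq[rule_format, OF e(4) e(10)] Hq[rule_format, OF e(4) e(13)] Hq[rule_format, OF e(4) e(15)] Hq[rule_format, OF e(4) e(16)] Hq[rule_format, OF e(5) e(3)] Hq[rule_format, OF e(5) e(11)] Hq[rule_format, OF e(5) e(13)] Hq[rule_format, OF e(5) e(16)] Hq[rule_format, OF e(6) e(2)] Hq[rule_format, OF e(6) e(8)] Hq[rule_format, OF e(6) e(10)] Hq[rule_format, OF e(6) e(15)] Hq[rule_format, OF e(7) e(2)] Hq[rule_format, OF e(7) e(3)] Hq[rule_format, OF e(7) e(8)] Hq[rule_format, OF e(7) e(11)] Hq[rule_format, OF e(8) e(6)] Hq[rule_format, OF e(8) e(14)] Hq[rule_format,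 OF e(9) e(3)] Hq[rule_format, OF e(9) e(11)] Hq[rule_format, OF e(9) e(13)] Hq[rule_format, OF e(9) e(16)] Hq[rule_format, OF e(10) e(1)] Hq[rule_format, OF e(10) e(4)] Hq[rule_format, OF e(10) e(6)] Hq[rule_format, OF e(10) e(12)] Hq[rule_format, OF e(11) e(5)] Hq[rule_format, OF e(11) e(14)] Hq[rule_format, OF e(12) e(2)] Hq[rule_format, OF e(12) e(8)] Hq[rule_format, OF e(12) e(10)] Hq[rule_format, OF e(12) e(15)] Hq[rule_format, OF e(13) e(1)] Hq[rule_format, OF e(13) e(5)] Hq[rule_format, OF e(14) e(2)] Hq[rule_format, OF e(14) e(3)] Hq[rule_format, OF e(14) e(8)] Hq[rule_format, OF e(14) e(11)] Hq[rule_format, OF e(15) e(1)] Hq[rule_format, OF e(15) e(4)] Hq[rule_format, OF e(15) e(6)] Hq[rule_format, OF e(15) e(12)] Hq[rule_format, OF e(16) e(1)] Hq[rule_format, OF e(16) e(5)] Hq[rule_format, OF e(16) e(9)] by (smt (z3))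
qed

type_synonym pth = "int \<times> int \<times> int \<times> int \<times> int \<times> int"

definition okp :: "pth \<Rightarrow> bool" where
  "okp P \<longleftrightarrow> (case P of (x,y,hl,hr,vl,vr) \<Rightarrow> hl \<le> x \<and> x \<le> hr \<and> (x = hl \<or> x = hr) \<and> vl \<le> y \<and> y \<le> vr \<and> (y = vl \<or> y = vr))"

definition meet :: "pth \<Rightarrow> pth \<Rightarrow> bool" where
  "meet P Q \<longleftrightarrow> (case P of (x,y,hl,hr,vl,vr) \<Rightarrow> case Q of (x',y',hl',hr',vl',vr') \<Rightarrow>
     (y = y' \<and> hl < hr' \<and> hl' < hr \<and> hl < hr \<and> hl' < hr') \<or>
     (x = x' \<and> vl < vr' \<and> vl' < vr \<and> vl < vr \<and> vl' < vr'))"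

definition pset :: "pth \<Rightarrow> (int \<times> int) set set" where
  "pset P = (case P of (x,y,hl,hr,vl,vr) \<Rightarrow> hseg y hl hr \<union> vseg x vl vr)"

lemma hseg_mem: "e \<in> hseg y a b \<longleftrightarrow> (\<exists>i. e = {(i, y), (i + 1, y)} \<and> min a b \<le> i \<and> i + 1 \<le> max a b)"
  unfolding hseg_def by blast
lemma vseg_mem: "e \<in> vseg x a b \<longleftrightarrow> (\<exists>j. e = {(x, j), (x, j + 1)} \<and> min a b \<le> j \<and> j + 1 \<le> max a b)"
  unfolding vseg_def by blast

lemma hv_disj: "hseg y a b \<inter> vseg x c d = {}"
  unfolding hseg_def vseg_def by (auto simp: doubleton_eq_iff)

lemma hh_int: "hseg y a b \<inter> hseg y' a' b' \<noteq> {} \<longleftrightarrow>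
   y = y' \<and> max (min a b) (min a' b') + 1 \<le> min (max a b) (max a' b')"
proof
  assume "hseg y a b \<inter> hseg y' a' b' \<noteq> {}"
  then obtain e where "e \<in> hseg y a b" "e \<in> hseg y' a' b'" by blast
  then obtain i j where "e = {(i, y), (i + 1, y)}" "min a b \<le> i" "i + 1 \<le> max a b"
     "e = {(j, y'), (j + 1, y')}" "min a' b' \<le> j" "j + 1 \<le> max a' b'"
    unfolding hseg_mem by blast
  then show "y = y' \<and> max (min a b) (min a' b') + 1 \<le> min (max a b) (max a' b')"
    by (auto simp: doubleton_eq_iff)
next
  assume h: "y = y' \<and> max (min a b) (min a' b') + 1 \<le> min (max a b) (max a' b')"
  define i where "i = max (min a b) (min a' b')"
  have "{(i, y), (i + 1, y)} \<in> hseg y a b" "{(i, y), (i + 1, y)} \<in> hseg y' a' b'"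
    unfolding hseg_mem using h i_def by auto
  then show "hseg y a b \<inter> hseg y' a' b' \<noteq> {}" by blast
qed

lemma vv_int: "vseg x a b \<inter> vseg x' a' b' \<noteq> {} \<longleftrightarrow>
   x = x' \<and> max (min a b) (min a' b') + 1 \<le> min (max a b) (max a' b')"
proof
  assume "vseg x a b \<inter> vseg x' a' b' \<noteq> {}"
  then obtain e where "e \<in> vseg x a b" "e \<in> vseg x' a' b'" by blast
  then obtain i j where "e = {(x, i), (x, i + 1)}" "min a b \<le> i" "i + 1 \<le> max a b"
     "e = {(x', j), (x', j + 1)}" "min a' b' \<le> j" "j + 1 \<le> max a' b'"
    unfolding vseg_mem by blast
  then show "x = x' \<and> max (min a b) (min a' b') + 1 \<le> min (max a b) (max a' b')"
    by (auto simp: doubleton_eq_iff)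
next
  assume h: "x = x' \<and> max (min a b) (min a' b') + 1 \<le> min (max a b) (max a' b')"
  define i where "i = max (min a b) (min a' b')"
  have "{(x, i), (x, i + 1)} \<in> vseg x a b" "{(x, i), (x, i + 1)} \<in> vseg x' a' b'"
    unfolding vseg_mem using h i_def by auto
  then show "vseg x a b \<inter> vseg x' a' b' \<noteq> {}" by blast
qed

lemma pset_meet:
  assumes "okp P" "okp Q"
  shows "pset P \<inter> pset Q \<noteq> {} \<longleftrightarrow> meet P Q"
proof -
  obtain x y hl hr vl vr where P: "P = (x,y,hl,hr,vl,vr)" by (cases P) auto
  obtain x' y' hl' hr' vl' vr' where Q: "Q = (x',y',hl',hr',vl',vr')" by (cases Q) auto
  have o: "hl \<le> hr" "vl \<le> vr" "hl' \<le> hr'" "vl' \<le> vr'" using assms unfolding P Q okp_def by auto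
  have "pset P \<inter> pset Q = (hseg y hl hr \<inter> hseg y' hl' hr') \<union> (vseg x vl vr \<inter> vseg x' vl' vr')"
    unfolding P Q pset_def using hv_disj[of y hl hr x' vl' vr'] hv_disj[of y' hl' hr' x vl vr] by auto
  then have "pset P \<inter> pset Q \<noteq> {} \<longleftrightarrow> hseg y hl hr \<inter> hseg y' hl' hr' \<noteq> {} \<or> vseg x vl vr \<inter> vseg x' vl' vr' \<noteq> {}"
    by auto
  also have "\<dots> \<longleftrightarrow> meet P Q" unfolding hh_int vv_int P Q meet_def using o by auto
  finally show ?thesis .
qed

lemma bend1_pset: assumes "bend1_path S" shows "\<exists>t. okp t \<and> S = pset t"
proof -
  obtain cx cy h v where S: "S = hseg cy cx h \<union> vseg cx cy v" using assms unfolding bend1_path_def by blast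
  have "hseg cy cx h = hseg cy (min cx h) (max cx h)" unfolding hseg_def by simp
  moreover have "vseg cx cy v = vseg cx (min cy v) (max cy v)" unfolding vseg_def by simp
  ultimately have "S = pset (cx, cy, min cx h, max cx h, min cy v, max cy v)" unfolding S pset_def by simp
  moreover have "okp (cx, cy, min cx h, max cx h, min cy v, max cy v)" unfolding okp_def by auto
  ultimately show ?thesis by blast
qed

lemma B1_params:
  assumes "in_B1 V E"
  shows "\<exists>Q. (\<forall>v\<in>V. okp (Q v)) \<and> (\<forall>u\<in>V. \<forall>v\<in>V. u \<noteq> v \<longrightarrow> ({u, v} \<in> E \<longleftrightarrow> meet (Q u) (Q v)))"
proof -
  obtain P where P1: "\<forall>v\<in>V. bend1_path (P v)" and P2: "\<forall>u\<in>V. \<forall>v\<in>V. u \<noteq> v \<longrightarrow> ({u, v} \<in> E \<longleftrightarrow> P u \<inter> P v \<noteq> {})"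
    using assms unfolding in_B1_def by blast
  define Q where "Q v = (SOME t. okp t \<and> P v = pset t)" for v
  have Q: "okp (Q v) \<and> P v = pset (Q v)" if "v \<in> V" for v
    unfolding Q_def using bend1_pset[OF P1[rule_format, OF that]] by (rule someI_ex)
  show ?thesis
    apply (rule exI[of _ Q])
    using Q P2 pset_meet by metis
qed

definition covR :: "pth \<Rightarrow> int \<Rightarrow> int \<Rightarrow> bool" where
  "covR P px py \<longleftrightarrow> (case P of (x,y,hl,hr,vl,vr) \<Rightarrow> y = py \<and> hl \<le> px \<and> px + 1 \<le> hr)"
definition covL :: "pth \<Rightarrow> int \<Rightarrow> int \<Rightarrow> bool" where
  "covL P px py \<longleftrightarrow> (case P of (x,y,hl,hr,vl,vr) \<Rightarrow> y = py \<and> hl \<le> px - 1 \<and> px \<le> hr)"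
definition covU :: "pth \<Rightarrow> int \<Rightarrow> int \<Rightarrow> bool" where
  "covU P px py \<longleftrightarrow> (case P of (x,y,hl,hr,vl,vr) \<Rightarrow> x = px \<and> vl \<le> py \<and> py + 1 \<le> vr)"
definition covD :: "pth \<Rightarrow> int \<Rightarrow> int \<Rightarrow> bool" where
  "covD P px py \<longleftrightarrow> (case P of (x,y,hl,hr,vl,vr) \<Rightarrow> x = px \<and> vl \<le> py - 1 \<and> py \<le> vr)"

definition bent :: "pth \<Rightarrow> int \<Rightarrow> int \<Rightarrow> bool" where
  "bent P px py \<longleftrightarrow> (case P of (x,y,hl,hr,vl,vr) \<Rightarrow> x = px \<and> y = py \<and> hl < hr \<and> vl < vr)"

definition claw :: "pth \<Rightarrow> pth \<Rightarrow> pth \<Rightarrow> int \<Rightarrow> int \<Rightarrow> bool" where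
  "claw A B C px py \<longleftrightarrow>
    (covR A px py \<and> covL A px py \<and> covL B px py \<and> covU B px py \<and> covR C px py \<and> covU C px py) \<or>
    (covR A px py \<and> covL A px py \<and> covL B px py \<and> covD B px py \<and> covR C px py \<and> covD C px py) \<or>
    (covR A px py \<and> covU A px py \<and> covU B px py \<and> covL B px py \<and> covR C px py \<and> covL C px py) \<or>
    (covR A px py \<and> covU A px py \<and> covU B px py \<and> covD B px py \<and> covR C px py \<and> covD C px py) \<or>
    (covR A px py \<and> covD A px py \<and> covD B px py \<and> covL B px py \<and> covR C px py \<and> covL C px py) \<or>
    (covR A px py \<and> covD A px py \<and> covD B px py \<and> covU B px py \<and> covR C px py \<and> covU C px py) \<or>
    (covL A px py \<and> covR A px py \<and> covR B px py \<and> covU B px py \<and> covL C px py \<and> covU C px py) \<or>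
    (covL A px py \<and> covR A px py \<and> covR B px py \<and> covD B px py \<and> covL C px py \<and> covD C px py) \<or>
    (covL A px py \<and> covU A px py \<and> covU B px py \<and> covR B px py \<and> covL C px py \<and> covR C px py) \<or>
    (covL A px py \<and> covU A px py \<and> covU B px py \<and> covD B px py \<and> covL C px py \<and> covD C px py) \<or>
    (covL A px py \<and> covD A px py \<and> covD B px py \<and> covR B px py \<and> covL C px py \<and> covR C px py) \<or>
    (covL A px py \<and> covD A px py \<and> covD B px py \<and> covU B px py \<and> covL C px py \<and> covU C px py) \<or>
    (covU A px py \<and> covR A px py \<and> covR B px py \<and> covL B px py \<and> covU C px py \<and> covL C px py) \<or>
    (covU A px py \<and> covR A px py \<and> covR B px py \<and> covD B px py \<and> covU C px py \<and> covD C px py) \<or>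
    (covU A px py \<and> covL A px py \<and> covL B px py \<and> covR B px py \<and> covU C px py \<and> covR C px py) \<or>
    (covU A px py \<and> covL A px py \<and> covL B px py \<and> covD B px py \<and> covU C px py \<and> covD C px py) \<or>
    (covU A px py \<and> covD A px py \<and> covD B px py \<and> covR B px py \<and> covU C px py \<and> covR C px py) \<or>
    (covU A px py \<and> covD A px py \<and> covD B px py \<and> covL B px py \<and> covU C px py \<and> covL C px py) \<or>
    (covD A px py \<and> covR A px py \<and> covR B px py \<and> covL B px py \<and> covD C px py \<and> covL C px py) \<or>
    (covD A px py \<and> covR A px py \<and> covR B px py \<and> covU B px py \<and> covD C px py \<and> covU C px py) \<or>
    (covD A px py \<and> covL A px py \<and> covL B px py \<and> covR B px py \<and> covD C px py \<and> covR C px py) \<or>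
    (covD A px py \<and> covL A px py \<and> covL B px py \<and> covU B px py \<and> covD C px py \<and> covU C px py) \<or>
    (covD A px py \<and> covU A px py \<and> covU B px py \<and> covR B px py \<and> covD C px py \<and> covR C px py) \<or>
    (covD A px py \<and> covU A px py \<and> covU B px py \<and> covL B px py \<and> covD C px py \<and> covL C px py)"

definition s3p :: "pth \<Rightarrow> pth \<Rightarrow> pth \<Rightarrow> pth \<Rightarrow> pth \<Rightarrow> pth \<Rightarrow> bool" where
  "s3p A B C D E F \<longleftrightarrow> meet A B \<and> meet A C \<and> meet A D \<and> \<not> meet A E \<and> meet A F \<and> meet B C \<and> meet B D \<and> meet B E \<and> \<not> meet B F \<and> \<not> meet C D \<and> meet C E \<and> meet C F \<and> \<not> meet D E \<and> \<not> meet D F \<and> \<not> meet E F"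
lemma s3_claw3:
  assumes "okp A" "okp B" "okp C" "okp D" "okp E" "okp F" "s3p A B C D E F"
  shows "claw A B C (fst A) (fst (snd A)) \<or> claw A B C (fst B) (fst (snd B)) \<or> claw A B C (fst C) (fst (snd C))"
proof -
  obtain x_A y_A hl_A hr_A vl_A vr_A where A: "A = (x_A,y_A,hl_A,hr_A,vl_A,vr_A)" using prod_cases6 by blast
  obtain x_B y_B hl_B hr_B vl_B vr_B where B: "B = (x_B,y_B,hl_B,hr_B,vl_B,vr_B)" using prod_cases6 by blast
  obtain x_C y_C hl_C hr_C vl_C vr_C where C: "C = (x_C,y_C,hl_C,hr_C,vl_C,vr_C)" using prod_cases6 by blast
  obtain x_D y_D hl_D hr_D vl_D vr_D where D: "D = (x_D,y_D,hl_D,hr_D,vl_D,vr_D)" using prod_cases6 by blast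
  obtain x_E y_E hl_E hr_E vl_E vr_E where E: "E = (x_E,y_E,hl_E,hr_E,vl_E,vr_E)" using prod_cases6 by blast
  obtain x_F y_F hl_F hr_F vl_F vr_F where F: "F = (x_F,y_F,hl_F,hr_F,vl_F,vr_F)" using prod_cases6 by blast
  show ?thesis
  using assms unfolding A B C D E F okp_def s3p_def meet_def claw_def covR_def covL_def covU_def covD_def bent_def
  apply simp
  by (smt (z3))
qed


lemma diam_chord:
  assumes "okp P1" "okp P2" "okp P3" "okp P4" "okp E1" "okp E2" "okp E3" "okp E4" "s3p P1 P2 P3 E1 E2 P4" "s3p P1 P3 P4 P2 E3 E4" "claw P1 P2 P3 q1x q1y" "claw P1 P3 P4 q2x q2y"
  shows "bent P1 q1x q1y \<or> bent P1 q2x q2y"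
proof -
  obtain x_P1 y_P1 hl_P1 hr_P1 vl_P1 vr_P1 where P1: "P1 = (x_P1,y_P1,hl_P1,hr_P1,vl_P1,vr_P1)" using prod_cases6 by blast
  obtain x_P2 y_P2 hl_P2 hr_P2 vl_P2 vr_P2 where P2: "P2 = (x_P2,y_P2,hl_P2,hr_P2,vl_P2,vr_P2)" using prod_cases6 by blast
  obtain x_P3 y_P3 hl_P3 hr_P3 vl_P3 vr_P3 where P3: "P3 = (x_P3,y_P3,hl_P3,hr_P3,vl_P3,vr_P3)" using prod_cases6 by blast
  obtain x_P4 y_P4 hl_P4 hr_P4 vl_P4 vr_P4 where P4: "P4 = (x_P4,y_P4,hl_P4,hr_P4,vl_P4,vr_P4)" using prod_cases6 by blast
  obtain x_E1 y_E1 hl_E1 hr_E1 vl_E1 vr_E1 where E1: "E1 = (x_E1,y_E1,hl_E1,hr_E1,vl_E1,vr_E1)" using prod_cases6 by blast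
  obtain x_E2 y_E2 hl_E2 hr_E2 vl_E2 vr_E2 where E2: "E2 = (x_E2,y_E2,hl_E2,hr_E2,vl_E2,vr_E2)" using prod_cases6 by blast
  obtain x_E3 y_E3 hl_E3 hr_E3 vl_E3 vr_E3 where E3: "E3 = (x_E3,y_E3,hl_E3,hr_E3,vl_E3,vr_E3)" using prod_cases6 by blast
  obtain x_E4 y_E4 hl_E4 hr_E4 vl_E4 vr_E4 where E4: "E4 = (x_E4,y_E4,hl_E4,hr_E4,vl_E4,vr_E4)" using prod_cases6 by blast
  show ?thesis
  using assms unfolding P1 P2 P3 P4 E1 E2 E3 E4 okp_def s3p_def meet_def claw_def covR_def covL_def covU_def covD_def bent_def
  apply simp
  by (smt (z3))
qed


lemma diam_nonchord:
  assumes "okp P1" "okp P2" "okp P3" "okp P4" "okp E1" "okp E2" "okp E3" "okp E4" "s3p P1 P2 P4 E1 P3 E2" "s3p P2 P3 P4 E3 E4 P1" "claw P1 P2 P4 q1x q1y" "claw P2 P3 P4 q2x q2y"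
  shows "bent P1 q1x q1y"
proof -
  obtain x_P1 y_P1 hl_P1 hr_P1 vl_P1 vr_P1 where P1: "P1 = (x_P1,y_P1,hl_P1,hr_P1,vl_P1,vr_P1)" using prod_cases6 by blast
  obtain x_P2 y_P2 hl_P2 hr_P2 vl_P2 vr_P2 where P2: "P2 = (x_P2,y_P2,hl_P2,hr_P2,vl_P2,vr_P2)" using prod_cases6 by blast
  obtain x_P3 y_P3 hl_P3 hr_P3 vl_P3 vr_P3 where P3: "P3 = (x_P3,y_P3,hl_P3,hr_P3,vl_P3,vr_P3)" using prod_cases6 by blast
  obtain x_P4 y_P4 hl_P4 hr_P4 vl_P4 vr_P4 where P4: "P4 = (x_P4,y_P4,hl_P4,hr_P4,vl_P4,vr_P4)" using prod_cases6 by blast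
  obtain x_E1 y_E1 hl_E1 hr_E1 vl_E1 vr_E1 where E1: "E1 = (x_E1,y_E1,hl_E1,hr_E1,vl_E1,vr_E1)" using prod_cases6 by blast
  obtain x_E2 y_E2 hl_E2 hr_E2 vl_E2 vr_E2 where E2: "E2 = (x_E2,y_E2,hl_E2,hr_E2,vl_E2,vr_E2)" using prod_cases6 by blast
  obtain x_E3 y_E3 hl_E3 hr_E3 vl_E3 vr_E3 where E3: "E3 = (x_E3,y_E3,hl_E3,hr_E3,vl_E3,vr_E3)" using prod_cases6 by blast
  obtain x_E4 y_E4 hl_E4 hr_E4 vl_E4 vr_E4 where E4: "E4 = (x_E4,y_E4,hl_E4,hr_E4,vl_E4,vr_E4)" using prod_cases6 by blast
  show ?thesis
  using assms unfolding P1 P2 P3 P4 E1 E2 E3 E4 okp_def s3p_def meet_def claw_def covR_def covL_def covU_def covD_def bent_def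
  apply simp
  by (smt (z3))
qed


definition cov :: "pth \<Rightarrow> int \<Rightarrow> int \<Rightarrow> nat \<Rightarrow> bool" where
  "cov P px py d \<longleftrightarrow> (d = 0 \<and> covR P px py) \<or> (d = 1 \<and> covL P px py) \<or> (d = 2 \<and> covU P px py) \<or> (d = 3 \<and> covD P px py)"

lemma claw_arms:
  assumes "claw A B C px py"
  shows "\<exists>a b c. a \<noteq> b \<and> b \<noteq> c \<and> a \<noteq> c \<and> cov A px py a \<and> cov A px py b \<and> cov B px py b \<and> cov B px py c \<and>
     cov C px py a \<and> cov C px py c"
  using assms unfolding claw_def
  apply (elim disjE)
  subgoal by (rule exI[of _ 0], rule exI[of _ 1], rule exI[of _ 2]) (simp add: cov_def)
  subgoal by (rule exI[of _ 0], rule exI[of _ 1], rule exI[of _ 3]) (simp add: cov_def)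
  subgoal by (rule exI[of _ 0], rule exI[of _ 2], rule exI[of _ 1]) (simp add: cov_def)
  subgoal by (rule exI[of _ 0], rule exI[of _ 2], rule exI[of _ 3]) (simp add: cov_def)
  subgoal by (rule exI[of _ 0], rule exI[of _ 3], rule exI[of _ 1]) (simp add: cov_def)
  subgoal by (rule exI[of _ 0], rule exI[of _ 3], rule exI[of _ 2]) (simp add: cov_def)
  subgoal by (rule exI[of _ 1], rule exI[of _ 0], rule exI[of _ 2]) (simp add: cov_def)
  subgoal by (rule exI[of _ 1], rule exI[of _ 0], rule exI[of _ 3]) (simp add: cov_def)
  subgoal by (rule exI[of _ 1], rule exI[of _ 2], rule exI[of _ 0]) (simp add: cov_def)
  subgoal by (rule exI[of _ 1], rule exI[of _ 2], rule exI[of _ 3]) (simp add: cov_def)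
  subgoal by (rule exI[of _ 1], rule exI[of _ 3], rule exI[of _ 0]) (simp add: cov_def)
  subgoal by (rule exI[of _ 1], rule exI[of _ 3], rule exI[of _ 2]) (simp add: cov_def)
  subgoal by (rule exI[of _ 2], rule exI[of _ 0], rule exI[of _ 1]) (simp add: cov_def)
  subgoal by (rule exI[of _ 2], rule exI[of _ 0], rule exI[of _ 3]) (simp add: cov_def)
  subgoal by (rule exI[of _ 2], rule exI[of _ 1], rule exI[of _ 0]) (simp add: cov_def)
  subgoal by (rule exI[of _ 2], rule exI[of _ 1], rule exI[of _ 3]) (simp add: cov_def)
  subgoal by (rule exI[of _ 2], rule exI[of _ 3], rule exI[of _ 0]) (simp add: cov_def)
  subgoal by (rule exI[of _ 2], rule exI[of _ 3], rule exI[of _ 1]) (simp add: cov_def)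
  subgoal by (rule exI[of _ 3], rule exI[of _ 0], rule exI[of _ 1]) (simp add: cov_def)
  subgoal by (rule exI[of _ 3], rule exI[of _ 0], rule exI[of _ 2]) (simp add: cov_def)
  subgoal by (rule exI[of _ 3], rule exI[of _ 1], rule exI[of _ 0]) (simp add: cov_def)
  subgoal by (rule exI[of _ 3], rule exI[of _ 1], rule exI[of _ 2]) (simp add: cov_def)
  subgoal by (rule exI[of _ 3], rule exI[of _ 2], rule exI[of _ 0]) (simp add: cov_def)
  subgoal by (rule exI[of _ 3], rule exI[of _ 2], rule exI[of _ 1]) (simp add: cov_def)
  done

lemma no3:
  assumes "okp S"
  shows "\<not> (covR S px py \<and> covL S px py \<and> covU S px py)" "\<not> (covR S px py \<and> covL S px py \<and> covD S px py)"
    "\<not> (covR S px py \<and> covU S px py \<and> covD S px py)" "\<not> (covL S px py \<and> covU S px py \<and> covD S px py)"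
proof -
  obtain x y hl hr vl vr where S: "S = (x,y,hl,hr,vl,vr)" using prod_cases6 by blast
  show "\<not> (covR S px py \<and> covL S px py \<and> covU S px py)" "\<not> (covR S px py \<and> covL S px py \<and> covD S px py)"
    "\<not> (covR S px py \<and> covU S px py \<and> covD S px py)" "\<not> (covL S px py \<and> covU S px py \<and> covD S px py)"
    using assms unfolding S okp_def covR_def covL_def covU_def covD_def by auto
qed

lemma three_arms:
  assumes "okp S" "cov S px py a" "cov S px py b" "cov S px py c" "a \<noteq> b" "b \<noteq> c" "a \<noteq> c"
  shows False
  using assms(2-) no3[OF assms(1), of px py] unfolding cov_def by auto

lemma share_arm:
  assumes "okp U" "okp W" "cov U px py a" "cov W px py a"
  shows "meet U W"
proof -
  obtain x y hl hr vl vr where U: "U = (x,y,hl,hr,vl,vr)" using prod_cases6 by blast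
  obtain x' y' hl' hr' vl' vr' where W: "W = (x',y',hl',hr',vl',vr')" using prod_cases6 by blast
  have h: "(covR U px py \<and> covR W px py) \<or> (covL U px py \<and> covL W px py) \<or> (covU U px py \<and> covU W px py) \<or> (covD U px py \<and> covD W px py)"
    using assms(3,4) unfolding cov_def by auto
  show ?thesis using h
  proof (elim disjE)
    assume "covR U px py \<and> covR W px py"
    then show ?thesis unfolding U W covR_def meet_def by auto
  next
    assume "covL U px py \<and> covL W px py"
    then show ?thesis unfolding U W covL_def meet_def by auto
  next
    assume "covU U px py \<and> covU W px py"
    then show ?thesis unfolding U W covU_def meet_def by auto
  next
    assume "covD U px py \<and> covD W px py"
    then show ?thesis unfolding U W covD_def meet_def by auto
  qed
qed

lemma conflict_geo:
  assumes ok: "okp S" "okp U1" "okp U2" "okp W1" "okp W2" and c1: "claw S U1 U2 qx qy" and c2: "claw S W1 W2 qx qy"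
  shows "(meet U1 W1 \<and> meet U2 W2) \<or> (meet U1 W2 \<and> meet U2 W1)"
proof -
  obtain a b c where A: "a \<noteq> b" "b \<noteq> c" "a \<noteq> c" "cov S qx qy a" "cov S qx qy b" "cov U1 qx qy b" "cov U1 qx qy c"
     "cov U2 qx qy a" "cov U2 qx qy c" using claw_arms[OF c1] by blast
  obtain a' b' c' where B: "a' \<noteq> b'" "b' \<noteq> c'" "a' \<noteq> c'" "cov S qx qy a'" "cov S qx qy b'" "cov W1 qx qy b'" "cov W1 qx qy c'"
     "cov W2 qx qy a'" "cov W2 qx qy c'" using claw_arms[OF c2] by blast
  have "a' = a \<or> a' = b" using three_arms[OF ok(1) A(4) A(5) B(4)] A B by blast
  moreover have "b' = a \<or> b' = b" using three_arms[OF ok(1) A(4) A(5) B(5)] A B by blast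
  ultimately have "(a' = a \<and> b' = b) \<or> (a' = b \<and> b' = a)" using B(1) by blast
  then show ?thesis
  proof
    assume h: "a' = a \<and> b' = b"
    have "meet U1 W1" using share_arm[OF ok(2) ok(4) A(6)] B(6) h by simp
    moreover have "meet U2 W2" using share_arm[OF ok(3) ok(5) A(8)] B(8) h by simp
    ultimately show ?thesis by blast
  next
    assume h: "a' = b \<and> b' = a"
    have "meet U1 W2" using share_arm[OF ok(2) ok(5) A(6)] B(8) h by simp
    moreover have "meet U2 W1" using share_arm[OF ok(3) ok(4) A(8)] B(6) h by simp
    ultimately show ?thesis by blast
  qed
qed

lemma step_geo:
  assumes "okp S" "okp M" "okp T" "bent S qx qy" "claw S M T px py" "\<not> (px = qx \<and> py = qy)"
  shows "bent T px py"
proof -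
  obtain x_S y_S hl_S hr_S vl_S vr_S where S: "S = (x_S,y_S,hl_S,hr_S,vl_S,vr_S)" using prod_cases6 by blast
  obtain x_M y_M hl_M hr_M vl_M vr_M where M: "M = (x_M,y_M,hl_M,hr_M,vl_M,vr_M)" using prod_cases6 by blast
  obtain x_T y_T hl_T hr_T vl_T vr_T where T: "T = (x_T,y_T,hl_T,hr_T,vl_T,vr_T)" using prod_cases6 by blast
  show ?thesis
  using assms unfolding S M T okp_def s3p_def meet_def claw_def covR_def covL_def covU_def covD_def bent_def
  apply simp
  by (smt (z3))
qed


lemma twobent_geo:
  assumes "okp A" "okp B" "okp C" "claw A B C px py" "bent B px py" "bent C px py"
  shows "\<not> bent A px py"
proof -
  obtain x_A y_A hl_A hr_A vl_A vr_A where A: "A = (x_A,y_A,hl_A,hr_A,vl_A,vr_A)" using prod_cases6 by blast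
  obtain x_B y_B hl_B hr_B vl_B vr_B where B: "B = (x_B,y_B,hl_B,hr_B,vl_B,vr_B)" using prod_cases6 by blast
  obtain x_C y_C hl_C hr_C vl_C vr_C where C: "C = (x_C,y_C,hl_C,hr_C,vl_C,vr_C)" using prod_cases6 by blast
  show ?thesis
  using assms unfolding A B C okp_def s3p_def meet_def claw_def covR_def covL_def covU_def covD_def bent_def
  apply simp
  by (smt (z3))
qed


lemma bent_uniq: "bent P px py \<Longrightarrow> bent P qx qy \<Longrightarrow> px = qx \<and> py = qy"
  unfolding bent_def by (cases P rule: prod_cases6) auto

lemma claw_swap12: "claw A B C px py \<Longrightarrow> claw B A C px py"
  unfolding claw_def by (elim disjE conjE; simp)
lemma claw_swap23: "claw A B C px py \<Longrightarrow> claw A C B px py"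
  unfolding claw_def by (elim disjE conjE; simp)

lemma s3_claw: assumes "okp A" "okp B" "okp C" "okp D" "okp E" "okp F" "s3p A B C D E F"
  shows "\<exists>px py. claw A B C px py"
  using s3_claw3[OF assms] by blast


definition s3g :: "'a set set \<Rightarrow> 'a \<Rightarrow> 'a \<Rightarrow> 'a \<Rightarrow> 'a \<Rightarrow> 'a \<Rightarrow> 'a \<Rightarrow> bool" where
  "s3g E x1 x2 x3 y1 y2 y3 \<longleftrightarrow> distinct [x1,x2,x3,y1,y2,y3] \<and>
    {x1,x2} \<in> E \<and> {x1,x3} \<in> E \<and> {x2,x3} \<in> E \<and> {x1,y1} \<in> E \<and> {x2,y1} \<in> E \<and>
    {x2,y2} \<in> E \<and> {x3,y2} \<in> E \<and> {x3,y3} \<in> E \<and> {x1,y3} \<in> E \<and>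
    {x1,y2} \<notin> E \<and> {x2,y3} \<notin> E \<and> {x3,y1} \<notin> E \<and> {y1,y2} \<notin> E \<and> {y1,y3} \<notin> E \<and> {y2,y3} \<notin> E"

lemma s3g_rot: "s3g E x1 x2 x3 y1 y2 y3 \<Longrightarrow> s3g E x2 x3 x1 y2 y3 y1"
  unfolding s3g_def by (auto simp: insert_commute)
lemma s3g_refl: "s3g E x1 x2 x3 y1 y2 y3 \<Longrightarrow> s3g E x1 x3 x2 y3 y2 y1"
  unfolding s3g_def by (auto simp: insert_commute)

lemma sg_edge: assumes "simple_graph V E" "{u, v} \<in> E" shows "u \<in> V" "v \<in> V" "u \<noteq> v"
proof -
  obtain x y where "{u, v} = {x, y}" "x \<in> V" "y \<in> V" "x \<noteq> y"
    using assms unfolding simple_graph_def by blast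
  then show "u \<in> V" "v \<in> V" "u \<noteq> v" by (auto simp: doubleton_eq_iff)
qed

lemma tri_s3:
  assumes sg: "simple_graph V E" and op: "outerplanar V E"
    and e: "{a,b} \<in> E" "{b,c} \<in> E" "{c,a} \<in> E"
    and o1: "{o1,a} \<in> E" "{o1,b} \<in> E" "o1 \<noteq> c"
    and o2: "{o2,b} \<in> E" "{o2,c} \<in> E" "o2 \<noteq> a"
    and o3: "{o3,c} \<in> E" "{o3,a} \<in> E" "o3 \<noteq> b"
  shows "s3g E a b c o1 o2 o3"
proof -
  note se = sg_edge[OF sg]
  have V: "a \<in> V" "b \<in> V" "c \<in> V" "o1 \<in> V" "o2 \<in> V" "o3 \<in> V" using se e o1 o2 o3 by blast+
  have d0: "a \<noteq> b" "b \<noteq> c" "c \<noteq> a" "o1 \<noteq> a" "o1 \<noteq> b" "o2 \<noteq> b" "o2 \<noteq> c" "o3 \<noteq> c" "o3 \<noteq> a"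
    using se e o1 o2 o3 by blast+
  have E': "{a,c} \<in> E" "{a,o1} \<in> E" "{b,o1} \<in> E" "{b,o2} \<in> E" "{c,o2} \<in> E" "{c,o3} \<in> E" "{a,o3} \<in> E"
    using e o1 o2 o3 by (auto simp: insert_commute)
  have n12: "o1 \<noteq> o2"
  proof
    assume "o1 = o2"
    then show False using op_K4[OF op, of a b c o1] V d0 e o1 o2 o3 by (auto simp: insert_commute)
  qed
  have n13: "o1 \<noteq> o3"
  proof
    assume "o1 = o3"
    then show False using op_K4[OF op, of a b c o1] V d0 e o1 o2 o3 by (auto simp: insert_commute)
  qed
  have n23: "o2 \<noteq> o3"
  proof
    assume "o2 = o3"
    then show False using op_K4[OF op, of a b c o2] V d0 e o1 o2 o3 by (auto simp: insert_commute)
  qed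
  have k1: "{c, o1} \<notin> E"
  proof
    assume "{c, o1} \<in> E"
    then show False using op_K4[OF op, of a b c o1] V d0 e o1 o2 o3 by (auto simp: insert_commute)
  qed
  have k2: "{a, o2} \<notin> E"
  proof
    assume "{a, o2} \<in> E"
    then show False using op_K4[OF op, of a b c o2] V d0 e o1 o2 o3 by (auto simp: insert_commute)
  qed
  have k3: "{b, o3} \<notin> E"
  proof
    assume "{b, o3} \<in> E"
    then show False using op_K4[OF op, of a b c o3] V d0 e o1 o2 o3 by (auto simp: insert_commute)
  qed
  have f12: "{o1, o2} \<notin> E"
  proof
    assume h: "{o1, o2} \<in> E"
    show False using op_five[OF op, of a b c o1 o2] V d0 e o1 o2 o3 n12 h by (auto simp: insert_commute)
  qed
  have f23: "{o2, o3} \<notin> E"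
  proof
    assume h: "{o2, o3} \<in> E"
    show False using op_five[OF op, of b c a o2 o3] V d0 e o1 o2 o3 n23 h by (auto simp: insert_commute)
  qed
  have f31: "{o3, o1} \<notin> E"
  proof
    assume h: "{o3, o1} \<in> E"
    show False using op_five[OF op, of c a b o3 o1] V d0 e o1 o2 o3 n13 h by (auto simp: insert_commute)
  qed
  show ?thesis unfolding s3g_def
    using d0 n12 n13 n23 k1 k2 k3 f12 f23 f31 e E' o1 o2 o3
    by (auto simp: insert_commute)
qed

lemma red_edge_apex:
  assumes "{u, v} \<in> red_E V E"
  shows "\<exists>z y. z \<noteq> y \<and> {z,u} \<in> E \<and> {z,v} \<in> E \<and> {y,u} \<in> E \<and> {y,v} \<in> E"
proof -
  obtain f i j where f: "induced_emb S3_V S3_E V E f" and ij: "i \<in> {0,1,2}" "j \<in> {0,1,2}" "i \<noteq> j"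
    and uv: "{u, v} = {f i, f j}"
    using assms unfolding red_E_def by blast
  have inj: "inj_on f S3_V" and ad: "\<And>x y. x \<in> S3_V \<Longrightarrow> y \<in> S3_V \<Longrightarrow> {f x, f y} \<in> E \<longleftrightarrow> {x, y} \<in> S3_E"
    using f unfolding induced_emb_def by auto
  have S: "S3_V = {0,1,2,3,4,5}" unfolding S3_V_def by auto
  have key: "\<exists>z y. z \<noteq> y \<and> {z,f i} \<in> E \<and> {z,f j} \<in> E \<and> {y,f i} \<in> E \<and> {y,f j} \<in> E"
    if "i' \<in> S3_V" "j' \<in> S3_V" "k \<in> S3_V" "e \<in> S3_V" "k \<noteq> e"
       "{k, i'} \<in> S3_E" "{k, j'} \<in> S3_E" "{e, i'} \<in> S3_E" "{e, j'} \<in> S3_E" "i' = i" "j' = j" for i' j' k e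
  proof -
    have "f k \<noteq> f e" using inj that unfolding inj_on_def by blast
    then show ?thesis using ad that by blast
  qed
  from ij have "(i = 0 \<and> j = 1) \<or> (i = 1 \<and> j = 0) \<or> (i = 0 \<and> j = 2) \<or> (i = 2 \<and> j = 0) \<or> (i = 1 \<and> j = 2) \<or> (i = 2 \<and> j = 1)"
    by auto
  then have "\<exists>z y. z \<noteq> y \<and> {z,f i} \<in> E \<and> {z,f j} \<in> E \<and> {y,f i} \<in> E \<and> {y,f j} \<in> E"
  proof (elim disjE)
    assume h: "i = 0 \<and> j = 1" show ?thesis by (rule key[of 0 1 2 3]) (use h in \<open>auto simp: S S3_E_def\<close>)
  next
    assume h: "i = 1 \<and> j = 0" show ?thesis by (rule key[of 1 0 2 3]) (use h in \<open>auto simp: S S3_E_def\<close>)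
  next
    assume h: "i = 0 \<and> j = 2" show ?thesis by (rule key[of 0 2 1 5]) (use h in \<open>auto simp: S S3_E_def\<close>)
  next
    assume h: "i = 2 \<and> j = 0" show ?thesis by (rule key[of 2 0 1 5]) (use h in \<open>auto simp: S S3_E_def\<close>)
  next
    assume h: "i = 1 \<and> j = 2" show ?thesis by (rule key[of 1 2 0 4]) (use h in \<open>auto simp: S S3_E_def\<close>)
  next
    assume h: "i = 2 \<and> j = 1" show ?thesis by (rule key[of 2 1 0 4]) (use h in \<open>auto simp: S S3_E_def\<close>)
  qed
  then show ?thesis using uv by (auto simp: doubleton_eq_iff)
qed

lemma red_edge_E:
  assumes "{u, v} \<in> red_E V E" shows "{u, v} \<in> E"
proof -
  obtain f i j where f: "induced_emb S3_V S3_E V E f" and ij: "i \<in> {0,1,2}" "j \<in> {0,1,2}" "i \<noteq> j"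
    and uv: "{u, v} = {f i, f j}"
    using assms unfolding red_E_def by blast
  have "{f i, f j} \<in> E" using f ij unfolding induced_emb_def S3_V_def S3_E_def
    by (auto simp: insert_commute)
  then show ?thesis using uv by simp
qed

lemma red_edge_other:
  assumes "{u, v} \<in> red_E V E"
  shows "\<exists>o'. o' \<noteq> c \<and> {o',u} \<in> E \<and> {o',v} \<in> E"
  using red_edge_apex[OF assms] by metis

lemma conflict_graph:
  assumes sg: "simple_graph V E" and op: "outerplanar V E"
    and T: "s3g E s u1 u2 y1 y2 y3"
    and w: "{s,w1} \<in> E" "{s,w2} \<in> E" "{w1,w2} \<in> E"
    and dis: "w1 \<noteq> u1" "w1 \<noteq> u2" "w2 \<noteq> u1" "w2 \<noteq> u2"
    and m: "({u1,w1} \<in> E \<and> {u2,w2} \<in> E) \<or> ({u1,w2} \<in> E \<and> {u2,w1} \<in> E)"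
  shows False
proof -
  note se = sg_edge[OF sg]
  have T': "distinct [s,u1,u2,y1,y2,y3]" "{s,u1} \<in> E" "{s,u2} \<in> E" "{u1,u2} \<in> E" "{s,y1} \<in> E" "{u1,y1} \<in> E"
    "{u2,y3} \<in> E" "{s,y3} \<in> E" "{y1,y3} \<notin> E"
    using T unfolding s3g_def by auto
  have V: "s \<in> V" "u1 \<in> V" "u2 \<in> V" "y1 \<in> V" "y3 \<in> V" "w1 \<in> V" "w2 \<in> V" using se T' w by blast+
  have ws: "w1 \<noteq> s" "w2 \<noteq> s" "w1 \<noteq> w2" using se w by blast+
  \<comment> \<open>edge s u1 lies in at most two triangles\<close>
  have A1: "w = y1" if "{u1, w} \<in> E" "{s, w} \<in> E" "w \<noteq> u2" "w \<noteq> s" "w \<noteq> u1" "w \<in> V" for w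
  proof (rule ccontr)
    assume "w \<noteq> y1"
    then show False using op_K113[OF op, of s u1 u2 y1 w] V T' that
      by (auto simp: insert_commute)
  qed
  have A3: "w = y3" if "{u2, w} \<in> E" "{s, w} \<in> E" "w \<noteq> u1" "w \<noteq> s" "w \<noteq> u2" "w \<in> V" for w
  proof (rule ccontr)
    assume "w \<noteq> y3"
    then show False using op_K113[OF op, of s u2 u1 y3 w] V T' that
      by (auto simp: insert_commute)
  qed
  from m show False
  proof
    assume h: "{u1,w1} \<in> E \<and> {u2,w2} \<in> E"
    have "w1 = y1" using A1[of w1] h w dis ws V by auto
    moreover have "w2 = y3" using A3[of w2] h w dis ws V by auto
    ultimately show False using T' w by auto
  next
    assume h: "{u1,w2} \<in> E \<and> {u2,w1} \<in> E"
    have "w2 = y1" using A1[of w2] h w dis ws V by auto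
    moreover have "w1 = y3" using A3[of w1] h w dis ws V by auto
    ultimately show False using T' w by (auto simp: insert_commute)
  qed
qed


locale B1set =
  fixes V :: "'a set" and E :: "'a set set" and Q :: "'a \<Rightarrow> pth"
  assumes sg: "simple_graph V E" and op: "outerplanar V E" and okQ: "\<And>v. v \<in> V \<Longrightarrow> okp (Q v)"
    and corr: "\<And>u v. u \<in> V \<Longrightarrow> v \<in> V \<Longrightarrow> u \<noteq> v \<Longrightarrow> meet (Q u) (Q v) \<longleftrightarrow> {u, v} \<in> E"
begin

lemma s3g_V: assumes "s3g E x1 x2 x3 y1 y2 y3"
  shows "x1 \<in> V" "x2 \<in> V" "x3 \<in> V" "y1 \<in> V" "y2 \<in> V" "y3 \<in> V"
  using assms sg_edge[OF sg] unfolding s3g_def by blast+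

lemma s3g_s3p: assumes T: "s3g E x1 x2 x3 y1 y2 y3"
  shows "s3p (Q x1) (Q x2) (Q x3) (Q y1) (Q y2) (Q y3)"
proof -
  note V = s3g_V[OF T]
  have d: "distinct [x1,x2,x3,y1,y2,y3]" using T unfolding s3g_def by blast
  show ?thesis using T V d unfolding s3p_def s3g_def by (simp add: corr)
qed

lemma clawT: assumes T: "s3g E x1 x2 x3 y1 y2 y3"
  shows "\<exists>px py. claw (Q x1) (Q x2) (Q x3) px py"
  using s3_claw[OF okQ okQ okQ okQ okQ okQ s3g_s3p[OF T]] s3g_V[OF T] by blast

lemma red_tri:
  assumes "{a,b} \<in> red_E V E" "{b,c} \<in> red_E V E" "{c,a} \<in> red_E V E"
  shows "\<exists>o1 o2 o3. s3g E a b c o1 o2 o3"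
proof -
  obtain o1 where o1: "o1 \<noteq> c" "{o1,a} \<in> E" "{o1,b} \<in> E" using red_edge_other[OF assms(1)] by blast
  obtain o2 where o2: "o2 \<noteq> a" "{o2,b} \<in> E" "{o2,c} \<in> E" using red_edge_other[OF assms(2)] by blast
  obtain o3 where o3: "o3 \<noteq> b" "{o3,c} \<in> E" "{o3,a} \<in> E" using red_edge_other[OF assms(3)] by blast
  show ?thesis using tri_s3[OF sg op red_edge_E[OF assms(1)] red_edge_E[OF assms(2)] red_edge_E[OF assms(3)]] o1 o2 o3
    by blast
qed

definition bentT :: "'a \<Rightarrow> 'a set \<Rightarrow> bool" where
  "bentT s F \<longleftrightarrow> (\<exists>u1 u2 y1 y2 y3 qx qy. s3g E s u1 u2 y1 y2 y3 \<and> claw (Q s) (Q u1) (Q u2) qx qy \<and>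
      bent (Q s) qx qy \<and> u1 \<in> F \<and> u2 \<in> F)"

lemma bentT_mono: "bentT s F \<Longrightarrow> F \<subseteq> F' \<Longrightarrow> bentT s F'"
  unfolding bentT_def by blast

lemma conflict:
  assumes T1: "s3g E s u1 u2 y1 y2 y3" and T2: "s3g E s w1 w2 z1 z2 z3"
    and dis: "w1 \<noteq> u1" "w1 \<noteq> u2" "w2 \<noteq> u1" "w2 \<noteq> u2"
    and c1: "claw (Q s) (Q u1) (Q u2) qx qy" and c2: "claw (Q s) (Q w1) (Q w2) qx qy"
  shows False
proof -
  note V1 = s3g_V[OF T1] and V2 = s3g_V[OF T2]
  have m: "(meet (Q u1) (Q w1) \<and> meet (Q u2) (Q w2)) \<or> (meet (Q u1) (Q w2) \<and> meet (Q u2) (Q w1))"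
    using conflict_geo[OF okQ okQ okQ okQ okQ c1 c2] V1 V2 by blast
  then have "({u1,w1} \<in> E \<and> {u2,w2} \<in> E) \<or> ({u1,w2} \<in> E \<and> {u2,w1} \<in> E)"
    using corr V1 V2 dis by metis
  moreover have "{s,w1} \<in> E" "{s,w2} \<in> E" "{w1,w2} \<in> E" using T2 unfolding s3g_def by auto
  ultimately show False using conflict_graph[OF sg op T1] dis by blast
qed

lemma final_conflict:
  assumes "bentT s F" "bentT s F'" "F \<inter> F' = {}"
  shows False
proof -
  obtain u1 u2 y1 y2 y3 qx qy where A: "s3g E s u1 u2 y1 y2 y3" "claw (Q s) (Q u1) (Q u2) qx qy"
      "bent (Q s) qx qy" "u1 \<in> F" "u2 \<in> F"
    using assms(1) unfolding bentT_def by blast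
  obtain w1 w2 z1 z2 z3 px py where B: "s3g E s w1 w2 z1 z2 z3" "claw (Q s) (Q w1) (Q w2) px py"
      "bent (Q s) px py" "w1 \<in> F'" "w2 \<in> F'"
    using assms(2) unfolding bentT_def by blast
  have "px = qx \<and> py = qy" using bent_uniq[OF A(3) B(3)] by simp
  then show False using conflict[OF A(1) B(1) _ _ _ _ A(2)] B(2) A(4,5) B(4,5) assms(3) by blast
qed

lemma claw_rot: "claw A B C px py \<Longrightarrow> claw C A B px py"
  by (meson claw_swap12 claw_swap23)

lemma step:
  assumes I: "bentT s F" and r: "{s,m} \<in> red_E V E" "{m,t} \<in> red_E V E" "{t,s} \<in> red_E V E"
    and mt: "m \<notin> F" "t \<notin> F"
  shows "bentT t {s, m}"
proof -
  obtain u1 u2 y1 y2 y3 qx qy where A: "s3g E s u1 u2 y1 y2 y3" "claw (Q s) (Q u1) (Q u2) qx qy"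
      "bent (Q s) qx qy" "u1 \<in> F" "u2 \<in> F"
    using I unfolding bentT_def by blast
  obtain o1 o2 o3 where T: "s3g E s m t o1 o2 o3" using red_tri[OF r] by blast
  obtain px py where c: "claw (Q s) (Q m) (Q t) px py" using clawT[OF T] by blast
  have "\<not> (px = qx \<and> py = qy)"
  proof
    assume "px = qx \<and> py = qy"
    then show False using conflict[OF A(1) T _ _ _ _ A(2)] c A(4,5) mt by blast
  qed
  then have b: "bent (Q t) px py"
    using step_geo[OF okQ okQ okQ A(3) c] s3g_V[OF T] by blast
  have T': "s3g E t s m o3 o1 o2" using s3g_rot[OF s3g_rot[OF T]] .
  have c': "claw (Q t) (Q s) (Q m) px py" using claw_rot[OF c] .
  show ?thesis unfolding bentT_def using T' c' b by blast
qed

lemma bentTI: "s3g E s u1 u2 y1 y2 y3 \<Longrightarrow> claw (Q s) (Q u1) (Q u2) qx qy \<Longrightarrow> bent (Q s) qx qy \<Longrightarrow>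
   u1 \<in> F \<Longrightarrow> u2 \<in> F \<Longrightarrow> bentT s F"
  unfolding bentT_def by blast

lemma diamond_chord:
  assumes r: "{a1,a2} \<in> red_E V E" "{a2,a3} \<in> red_E V E" "{a3,a4} \<in> red_E V E" "{a4,a1} \<in> red_E V E"
     "{a1,a3} \<in> red_E V E" and d: "a2 \<noteq> a4"
  shows "bentT a1 {a2, a3, a4}"
proof -
  have e1: "{a1,a2} \<in> E" using red_edge_E[OF r(1)] .
  have e2: "{a2,a3} \<in> E" using red_edge_E[OF r(2)] .
  have e3: "{a3,a4} \<in> E" using red_edge_E[OF r(3)] .
  have e4: "{a4,a1} \<in> E" using red_edge_E[OF r(4)] .
  have e5: "{a1,a3} \<in> E" using red_edge_E[OF r(5)] .
  have e3': "{a4,a3} \<in> E" using e3 by (simp add: insert_commute)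
  have e4': "{a1,a4} \<in> E" using e4 by (simp add: insert_commute)
  have e5': "{a3,a1} \<in> E" using e5 by (simp add: insert_commute)
  have e1': "{a2,a1} \<in> E" using e1 by (simp add: insert_commute)
  obtain o1 where o1: "o1 \<noteq> a3" "{o1,a1} \<in> E" "{o1,a2} \<in> E" using red_edge_other[OF r(1)] by blast
  obtain o2 where o2: "o2 \<noteq> a1" "{o2,a2} \<in> E" "{o2,a3} \<in> E" using red_edge_other[OF r(2)] by blast
  obtain o3 where o3: "o3 \<noteq> a1" "{o3,a3} \<in> E" "{o3,a4} \<in> E" using red_edge_other[OF r(3)] by blast
  obtain o4 where o4: "o4 \<noteq> a3" "{o4,a4} \<in> E" "{o4,a1} \<in> E" using red_edge_other[OF r(4)] by blast
  have T1: "s3g E a1 a2 a3 o1 o2 a4"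
    using tri_s3[OF sg op e1 e2 e5' o1(2) o1(3) o1(1) o2(2) o2(3) o2(1) e3' e4 d[symmetric]] .
  have T2: "s3g E a1 a3 a4 a2 o3 o4"
    using tri_s3[OF sg op e5 e3 e4 e1' e2 d o3(2) o3(3) o3(1) o4(2) o4(3) o4(1)] .
  obtain q1x q1y where c1: "claw (Q a1) (Q a2) (Q a3) q1x q1y" using clawT[OF T1] by blast
  obtain q2x q2y where c2: "claw (Q a1) (Q a3) (Q a4) q2x q2y" using clawT[OF T2] by blast
  note V1 = s3g_V[OF T1] and V2 = s3g_V[OF T2]
  have "bent (Q a1) q1x q1y \<or> bent (Q a1) q2x q2y"
    by (rule diam_chord[OF okQ[OF V1(1)] okQ[OF V1(2)] okQ[OF V1(3)] okQ[OF V1(6)] okQ[OF V1(4)] okQ[OF V1(5)]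
        okQ[OF V2(5)] okQ[OF V2(6)] s3g_s3p[OF T1] s3g_s3p[OF T2] c1 c2])
  then show ?thesis
  proof
    assume "bent (Q a1) q1x q1y"
    then show ?thesis by (rule bentTI[OF T1 c1]) auto
  next
    assume "bent (Q a1) q2x q2y"
    then show ?thesis by (rule bentTI[OF T2 c2]) auto
  qed
qed

lemma diamond_nonchord:
  assumes r: "{a1,a2} \<in> red_E V E" "{a2,a3} \<in> red_E V E" "{a3,a4} \<in> red_E V E" "{a4,a1} \<in> red_E V E"
     "{a2,a4} \<in> red_E V E" and d: "a1 \<noteq> a3"
  shows "bentT a1 {a2, a3, a4}"
proof -
  have e1: "{a1,a2} \<in> E" using red_edge_E[OF r(1)] .
  have e2: "{a2,a3} \<in> E" using red_edge_E[OF r(2)] .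
  have e3: "{a3,a4} \<in> E" using red_edge_E[OF r(3)] .
  have e4: "{a4,a1} \<in> E" using red_edge_E[OF r(4)] .
  have e5: "{a2,a4} \<in> E" using red_edge_E[OF r(5)] .
  have e2': "{a3,a2} \<in> E" using e2 by (simp add: insert_commute)
  have e4': "{a1,a4} \<in> E" using e4 by (simp add: insert_commute)
  have e5': "{a4,a2} \<in> E" using e5 by (simp add: insert_commute)
  have e1': "{a2,a1} \<in> E" using e1 by (simp add: insert_commute)
  obtain o1 where o1: "o1 \<noteq> a4" "{o1,a1} \<in> E" "{o1,a2} \<in> E" using red_edge_other[OF r(1)] by blast
  obtain o2 where o2: "o2 \<noteq> a4" "{o2,a2} \<in> E" "{o2,a3} \<in> E" using red_edge_other[OF r(2)] by blast
  obtain o3 where o3: "o3 \<noteq> a2" "{o3,a3} \<in> E" "{o3,a4} \<in> E" using red_edge_other[OF r(3)] by blast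
  obtain o4 where o4: "o4 \<noteq> a2" "{o4,a4} \<in> E" "{o4,a1} \<in> E" using red_edge_other[OF r(4)] by blast
  have T1: "s3g E a1 a2 a4 o1 a3 o4"
    using tri_s3[OF sg op e1 e5 e4 o1(2) o1(3) o1(1) e2' e3 d[symmetric] o4(2) o4(3) o4(1)] .
  have T2: "s3g E a2 a3 a4 o2 o3 a1"
    using tri_s3[OF sg op e2 e3 e5' o2(2) o2(3) o2(1) o3(2) o3(3) o3(1) e4' e1 d] .
  obtain q1x q1y where c1: "claw (Q a1) (Q a2) (Q a4) q1x q1y" using clawT[OF T1] by blast
  obtain q2x q2y where c2: "claw (Q a2) (Q a3) (Q a4) q2x q2y" using clawT[OF T2] by blast
  note V1 = s3g_V[OF T1] and V2 = s3g_V[OF T2]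
  have "bent (Q a1) q1x q1y"
    by (rule diam_nonchord[OF okQ[OF V1(1)] okQ[OF V1(2)] okQ[OF V1(5)] okQ[OF V1(3)] okQ[OF V1(4)] okQ[OF V1(6)]
        okQ[OF V2(4)] okQ[OF V2(5)] s3g_s3p[OF T1] s3g_s3p[OF T2] c1 c2])
  then show ?thesis by (rule bentTI[OF T1 c1]) auto
qed

lemma m1_false:
  assumes r: "{d1,d2} \<in> red_E V E" "{d1,d3} \<in> red_E V E" "{d2,d3} \<in> red_E V E" "{d3,d4} \<in> red_E V E"
     "{d2,d4} \<in> red_E V E" "{d4,d5} \<in> red_E V E" "{d2,d5} \<in> red_E V E"
    and d: "distinct [d1,d2,d3,d4,d5]"
  shows False
proof -
  have e12: "{d1,d2} \<in> E" using red_edge_E[OF r(1)] .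
  have e13: "{d1,d3} \<in> E" using red_edge_E[OF r(2)] .
  have e23: "{d2,d3} \<in> E" using red_edge_E[OF r(3)] .
  have e34: "{d3,d4} \<in> E" using red_edge_E[OF r(4)] .
  have e24: "{d2,d4} \<in> E" using red_edge_E[OF r(5)] .
  have e45: "{d4,d5} \<in> E" using red_edge_E[OF r(6)] .
  have e25: "{d2,d5} \<in> E" using red_edge_E[OF r(7)] .
  have e21: "{d2,d1} \<in> E" "{d3,d1} \<in> E" "{d3,d2} \<in> E" "{d4,d3} \<in> E" "{d4,d2} \<in> E" "{d5,d4} \<in> E" "{d5,d2} \<in> E"
    using e12 e13 e23 e34 e24 e45 e25 by (simp_all add: insert_commute)
  have dd: "d1 \<noteq> d4" "d4 \<noteq> d1" "d1 \<noteq> d3" "d5 \<noteq> d3" "d3 \<noteq> d5" "d4 \<noteq> d2" using d by auto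
  obtain o1 where o1: "o1 \<noteq> d3" "{o1,d2} \<in> E" "{o1,d1} \<in> E" using red_edge_other[OF r(1)] by blast
  obtain o2 where o2: "o2 \<noteq> d2" "{o2,d1} \<in> E" "{o2,d3} \<in> E" using red_edge_other[OF r(2)] by blast
  obtain o3 where o3: "o3 \<noteq> d2" "{o3,d3} \<in> E" "{o3,d4} \<in> E" using red_edge_other[OF r(4)] by blast
  obtain o4 where o4: "o4 \<noteq> d2" "{o4,d4} \<in> E" "{o4,d5} \<in> E" using red_edge_other[OF r(6)] by blast
  obtain o5 where o5: "o5 \<noteq> d4" "{o5,d5} \<in> E" "{o5,d2} \<in> E" using red_edge_other[OF r(7)] by blast
  have T1: "s3g E d2 d1 d3 o1 o2 d4"
    using tri_s3[OF sg op e21(1) e13 e21(3) o1(2) o1(3) o1(1) o2(2) o2(3) o2(1) e21(4) e21(5) dd(2)] .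
  have T2: "s3g E d2 d3 d4 d1 o3 d5"
    using tri_s3[OF sg op e23 e34 e21(5) e12 e13 dd(1) o3(2) o3(3) o3(1) e21(6) e21(7) dd(4)] .
  have T3: "s3g E d2 d4 d5 d3 o4 o5"
    using tri_s3[OF sg op e24 e45 e21(7) e21(3) e34 dd(5) o4(2) o4(3) o4(1) o5(2) o5(3) o5(1)] .
  obtain q1x q1y where c1: "claw (Q d2) (Q d1) (Q d3) q1x q1y" using clawT[OF T1] by blast
  obtain q2x q2y where c2: "claw (Q d2) (Q d3) (Q d4) q2x q2y" using clawT[OF T2] by blast
  obtain q3x q3y where c3: "claw (Q d2) (Q d4) (Q d5) q3x q3y" using clawT[OF T3] by blast
  note V1 = s3g_V[OF T1] and V2 = s3g_V[OF T2] and V3 = s3g_V[OF T3]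
  have i: "bent (Q d2) q1x q1y \<or> bent (Q d2) q2x q2y"
    by (rule diam_chord[OF okQ[OF V1(1)] okQ[OF V1(2)] okQ[OF V1(3)] okQ[OF V1(6)] okQ[OF V1(4)] okQ[OF V1(5)]
        okQ[OF V2(5)] okQ[OF V2(6)] s3g_s3p[OF T1] s3g_s3p[OF T2] c1 c2])
  have ii: "bent (Q d2) q2x q2y \<or> bent (Q d2) q3x q3y"
    by (rule diam_chord[OF okQ[OF V2(1)] okQ[OF V2(2)] okQ[OF V2(3)] okQ[OF V2(6)] okQ[OF V2(4)] okQ[OF V2(5)]
        okQ[OF V3(5)] okQ[OF V3(6)] s3g_s3p[OF T2] s3g_s3p[OF T3] c2 c3])
  have T2a: "s3g E d3 d2 d4 d1 d5 o3" using s3g_refl[OF s3g_rot[OF T2]] .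
  have T3a: "s3g E d2 d5 d4 o5 o4 d3" using s3g_refl[OF T3] .
  have iii: "bent (Q d3) q2x q2y"
    by (rule diam_nonchord[OF okQ[OF V2(2)] okQ[OF V2(1)] okQ[OF V2(6)] okQ[OF V2(3)] okQ[OF V2(4)] okQ[OF V2(5)]
        okQ[OF V3(6)] okQ[OF V3(5)] s3g_s3p[OF T2a] s3g_s3p[OF T3a] claw_swap12[OF c2] claw_swap23[OF c3]])
  have T2b: "s3g E d4 d2 d3 d5 d1 o3" using s3g_rot[OF s3g_rot[OF T2]] .
  have iv: "bent (Q d4) q2x q2y"
    by (rule diam_nonchord[OF okQ[OF V2(3)] okQ[OF V2(1)] okQ[OF V2(4)] okQ[OF V2(2)] okQ[OF V2(6)] okQ[OF V2(5)]
        okQ[OF V1(4)] okQ[OF V1(5)] s3g_s3p[OF T2b] s3g_s3p[OF T1] claw_rot[OF c2] c1])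
  have v: "\<not> bent (Q d2) q2x q2y"
    by (rule twobent_geo[OF okQ[OF V2(1)] okQ[OF V2(2)] okQ[OF V2(3)] c2 iii iv])
  have b1: "bent (Q d2) q1x q1y" using i v by blast
  have b3: "bent (Q d2) q3x q3y" using ii v by blast
  have B1: "bentT d2 {d1, d3}" by (rule bentTI[OF T1 c1 b1]) auto
  have B3: "bentT d2 {d4, d5}" by (rule bentTI[OF T3 c3 b3]) auto
  show False by (rule final_conflict[OF B1 B3]) (use d in auto)
qed

end

lemma M1l_edges:
  fixes l :: nat
  shows "{0, 2*l+1} \<in> M1l_E l ca cb" "{2*l+1, 2*l+2} \<in> M1l_E l ca cb" "{2*l+2, 2*l+3} \<in> M1l_E l ca cb"
    "{2*l+3, 0} \<in> M1l_E l ca cb"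
    "{2*l, 2*l+4} \<in> M1l_E l ca cb" "{2*l+4, 2*l+5} \<in> M1l_E l ca cb" "{2*l+5, 2*l+6} \<in> M1l_E l ca cb"
    "{2*l+6, 2*l} \<in> M1l_E l ca cb"
    "ca \<Longrightarrow> {0, 2*l+2} \<in> M1l_E l ca cb" "\<not> ca \<Longrightarrow> {2*l+1, 2*l+3} \<in> M1l_E l ca cb"
    "cb \<Longrightarrow> {2*l, 2*l+5} \<in> M1l_E l ca cb" "\<not> cb \<Longrightarrow> {2*l+4, 2*l+6} \<in> M1l_E l ca cb"
  unfolding M1l_E_def
  subgoal by (rule UnI1, rule UnI1) simp
  subgoal by (rule UnI1, rule UnI1) simp
  subgoal by (rule UnI1, rule UnI1) simp
  subgoal by (rule UnI1, rule UnI1) simp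
  subgoal by (rule UnI1, rule UnI2) simp
  subgoal by (rule UnI1, rule UnI2) simp
  subgoal by (rule UnI1, rule UnI2) simp
  subgoal by (rule UnI1, rule UnI2) simp
  subgoal by (rule UnI1, rule UnI1) simp
  subgoal by (rule UnI1, rule UnI1) simp
  subgoal by (rule UnI1, rule UnI2) simp
  subgoal by (rule UnI1, rule UnI2) simp
  done

lemma M1l_chain:
  fixes l k :: nat
  assumes "k < l"
  shows "{2*k, 2*k+1} \<in> M1l_E l ca cb" "{2*k+1, 2*k+2} \<in> M1l_E l ca cb" "{2*k+2, 2*k} \<in> M1l_E l ca cb"
proof -
  have k: "Suc k \<in> {1..l}" using assms by auto
  show "{2*k, 2*k+1} \<in> M1l_E l ca cb" unfolding M1l_E_def by (rule UnI2, rule UN_I[OF k]) simp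
  show "{2*k+1, 2*k+2} \<in> M1l_E l ca cb" unfolding M1l_E_def by (rule UnI2, rule UN_I[OF k]) simp
  have "{2*k, 2*k+2} \<in> M1l_E l ca cb" unfolding M1l_E_def by (rule UnI2, rule UN_I[OF k]) simp
  then show "{2*k+2, 2*k} \<in> M1l_E l ca cb" by (simp add: insert_commute)
qed

context B1set
begin

lemma m1l_false:
  assumes g: "induced_emb (M1l_V l) (M1l_E l ca cb) (red_V V E) (red_E V E) g"
  shows False
proof -
  have inj: "inj_on g (M1l_V l)" and ad: "\<And>x y. x \<in> M1l_V l \<Longrightarrow> y \<in> M1l_V l \<Longrightarrow> {g x, g y} \<in> red_E V E \<longleftrightarrow> {x, y} \<in> M1l_E l ca cb"
    using g unfolding induced_emb_def by auto
  have MV: "x \<in> M1l_V l \<longleftrightarrow> x \<le> 2*l+6" for x unfolding M1l_V_def by simp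
  have re: "{g x, g y} \<in> red_E V E" if "{x, y} \<in> M1l_E l ca cb" "x \<le> 2*l+6" "y \<le> 2*l+6" for x y
  proof -
    have "x \<in> M1l_V l" "y \<in> M1l_V l" using that(2,3) MV by blast+
    then show ?thesis using ad that(1) by blast
  qed
  have gi: "g x = g y \<longleftrightarrow> x = y" if "x \<le> 2*l+6" "y \<le> 2*l+6" for x y
  proof -
    have "x \<in> M1l_V l" "y \<in> M1l_V l" using that MV by blast+
    then show ?thesis using inj_on_eq_iff[OF inj] by blast
  qed
  note me = M1l_edges[where l=l and ca=ca and cb=cb]
  define F where "F k = g ` ({0..<2*k} \<union> {2*l+1, 2*l+2, 2*l+3})" for k
  have F0: "{g (2*l+1), g (2*l+2), g (2*l+3)} \<subseteq> F 0"
    unfolding F_def by (intro insert_subsetI empty_subsetI imageI) simp_all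
  have A: "bentT (g 0) (F 0)"
  proof (cases ca)
    case True
    have "bentT (g 0) {g (2*l+1), g (2*l+2), g (2*l+3)}"
      by (rule diamond_chord[OF re[OF me(1)] re[OF me(2)] re[OF me(3)] re[OF me(4)] re[OF me(9)[OF True]]])
         (simp_all add: gi)
    then show ?thesis using F0 by (rule bentT_mono)
  next
    case False
    have "bentT (g 0) {g (2*l+1), g (2*l+2), g (2*l+3)}"
      by (rule diamond_nonchord[OF re[OF me(1)] re[OF me(2)] re[OF me(3)] re[OF me(4)] re[OF me(10)[OF False]]])
         (simp_all add: gi)
    then show ?thesis using F0 by (rule bentT_mono)
  qed
  have B: "bentT (g (2*l)) {g (2*l+4), g (2*l+5), g (2*l+6)}"
  proof (cases cb)
    case True
    show ?thesis
      by (rule diamond_chord[OF re[OF me(5)] re[OF me(6)] re[OF me(7)] re[OF me(8)] re[OF me(11)[OF True]]])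
         (simp_all add: gi)
  next
    case False
    show ?thesis
      by (rule diamond_nonchord[OF re[OF me(5)] re[OF me(6)] re[OF me(7)] re[OF me(8)] re[OF me(12)[OF False]]])
         (simp_all add: gi)
  qed
  have C: "k \<le> l \<Longrightarrow> bentT (g (2*k)) (F k)" for k
  proof (induction k)
    case 0
    then show ?case using A by simp
  next
    case (Suc k)
    then have kl: "k < l" by simp
    have IH: "bentT (g (2*k)) (F k)" using Suc.IH kl by simp
    note ch = M1l_chain[OF kl, where ca=ca and cb=cb]
    have r1: "{g (2*k), g (2*k+1)} \<in> red_E V E" by (rule re[OF ch(1)]) (use kl in simp_all)
    have r2: "{g (2*k+1), g (2*k+2)} \<in> red_E V E" by (rule re[OF ch(2)]) (use kl in simp_all)
    have r3: "{g (2*k+2), g (2*k)} \<in> red_E V E" by (rule re[OF ch(3)]) (use kl in simp_all)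
    have n1: "g (2*k+1) \<notin> F k"
    proof
      assume "g (2*k+1) \<in> F k"
      then obtain x where x: "x \<in> {0..<2*k} \<union> {2*l+1, 2*l+2, 2*l+3}" "g (2*k+1) = g x" unfolding F_def by blast
      have "x \<le> 2*l+6" using x(1) kl by auto
      then have "2*k+1 = x" using gi[of "2*k+1" x] x(2) kl by simp
      then show False using x(1) kl by auto
    qed
    have n2: "g (2*k+2) \<notin> F k"
    proof
      assume "g (2*k+2) \<in> F k"
      then obtain x where x: "x \<in> {0..<2*k} \<union> {2*l+1, 2*l+2, 2*l+3}" "g (2*k+2) = g x" unfolding F_def by blast
      have "x \<le> 2*l+6" using x(1) kl by auto
      then have "2*k+2 = x" using gi[of "2*k+2" x] x(2) kl by simp
      then show False using x(1) kl by auto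
    qed
    have st: "bentT (g (2*k+2)) {g (2*k), g (2*k+1)}" using step[OF IH r1 r2 r3 n1 n2] .
    have sub: "{g (2*k), g (2*k+1)} \<subseteq> F (Suc k)"
      unfolding F_def by (intro insert_subsetI empty_subsetI imageI) simp_all
    have "bentT (g (2*k+2)) (F (Suc k))" using st sub by (rule bentT_mono)
    moreover have "2 * Suc k = 2*k+2" by simp
    ultimately show ?case by simp
  qed
  have D: "bentT (g (2*l)) (F l)" using C by simp
  have disj: "F l \<inter> {g (2*l+4), g (2*l+5), g (2*l+6)} = {}"
  proof (rule ccontr)
    assume "F l \<inter> {g (2*l+4), g (2*l+5), g (2*l+6)} \<noteq> {}"
    then obtain x y where x: "x \<in> {0..<2*l} \<union> {2*l+1, 2*l+2, 2*l+3}" and y: "y \<in> {2*l+4, 2*l+5, 2*l+6}"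
      and e: "g x = g y" unfolding F_def by blast
    have "x \<le> 2*l+6" "y \<le> 2*l+6" using x y by auto
    then have "x = y" using gi e by blast
    then show False using x y by auto
  qed
  show False using final_conflict[OF D B disj] .
qed

lemma m1_false':
  assumes g: "induced_emb M1_V M1_E (red_V V E) (red_E V E) g"
  shows False
proof -
  have inj: "inj_on g M1_V" and ad: "\<And>x y. x \<in> M1_V \<Longrightarrow> y \<in> M1_V \<Longrightarrow> {g x, g y} \<in> red_E V E \<longleftrightarrow> {x, y} \<in> M1_E"
    using g unfolding induced_emb_def by auto
  have MV: "M1_V = {1,2,3,4,5}" unfolding M1_V_def by auto
  have d: "distinct [g 1, g 2, g 3, g 4, g 5]" using inj unfolding MV inj_on_def by auto
  have r: "{g 1, g 2} \<in> red_E V E" "{g 1, g 3} \<in> red_E V E" "{g 2, g 3} \<in> red_E V E" "{g 3, g 4} \<in> red_E V E"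
     "{g 2, g 4} \<in> red_E V E" "{g 4, g 5} \<in> red_E V E" "{g 2, g 5} \<in> red_E V E"
    using ad[of 1 2] ad[of 1 3] ad[of 2 3] ad[of 3 4] ad[of 2 4] ad[of 4 5] ad[of 2 5]
    by (simp_all add: MV M1_E_def)
  show False by (rule m1_false[OF r d])
qed

end

theorem lemma4p12:
  fixes V :: "'a set" and E :: "'a set set"
  assumes "simple_graph V E"
    and "maximal_outerplanar V E"
    and "has_induced M1_V M1_E (red_V V E) (red_E V E) \<or>
         (\<exists>l ca cb. has_induced (M1l_V l) (M1l_E l ca cb) (red_V V E) (red_E V E))"
  shows "\<not> in_B1 V E"
proof
  assume "in_B1 V E"
  then obtain Q where okQ: "\<forall>v\<in>V. okp (Q v)"
    and corr: "\<forall>u\<in>V. \<forall>v\<in>V. u \<noteq> v \<longrightarrow> ({u, v} \<in> E \<longleftrightarrow> meet (Q u) (Q v))"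
    using B1_params by blast
  have op: "outerplanar V E" using assms(2) unfolding maximal_outerplanar_def by blast
  interpret B1set V E Q
    by unfold_locales (use assms(1) op okQ corr in auto)
  from assms(3) show False
  proof
    assume "has_induced M1_V M1_E (red_V V E) (red_E V E)"
    then show False using m1_false' unfolding has_induced_def by blast
  next
    assume "\<exists>l ca cb. has_induced (M1l_V l) (M1l_E l ca cb) (red_V V E) (red_E V E)"
    then show False using m1l_false unfolding has_induced_def by blast
  qed
qed


end
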